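(* Let $k\geq1$, $\triangle_2=\mathrm{Conv}\{(\pm2,0),(0,\pm1)\}\subset\mathbb{R}^2$, $W_2\cong\mathbb{Z}/2\times\mathbb{Z}/2$ the group generated by $(x,y)\mapsto(-x,y)$ and $(x,y)\mapsto(x,-y)$, $b=|\partial(k\triangle_2)\cap\mathbb{Z}^2|$, and for $0\le i\le k-1$ let $T_i=\mathrm{Conv}\{(0,0),a_i,a_{i+1}\}$ with $a_i=(2i,k-i)$. Let $\delta_k:k\triangle_2\cap\mathbb{Z}^2\to\mathbb{R}$ be a fixed function with $\sum_p\delta_k(p)=1$, and let $g\in\mathrm{PL}(\triangle_2;k)^{W_2}$ satisfy (a) $\sum_{p\in k\triangle_2\cap\mathbb{Z}^2}g(p)-\int_{k\triangle_2}g\,dV\le\frac12\sum_{p\in\partial(k\triangle_2)\cap\mathbb{Z}^2}g(p)+\sum_{p\in k\triangle_2\cap\mathbb{Z}^2}\delta_k(p)g(p)$, with equality only if $g$ is constant; and (b) $\frac{(b+2)|W_2|}{2b\,\mathrm{vol}(T_0)}\sum_{i=0}^{k-1}\int_{T_i}g\geq\frac12\sum_{p\in\partial(k\triangle_2)\cap\mathbb{Z}^2}g(p)+\sum_{p\in k\triangle_2\cap\mathbb{Z}^2}\delta_k(p)g(p)$, with equality only if $g$ is constant. Then $$\frac{1}{\mathrm{vol}(k\triangle_2)}\int_{k\triangle_2}g\,dV\geq\frac{1}{|k\triangle_2\cap\mathbb{Z}^2|}\sum_{p\in k\triangle_2\cap\mathbb{Z}^2}g(p),$$ with equality if and only if $g$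 is constant.
   Context: $\mathrm{PL}(\triangle;k)$: for $\phi:k\triangle\cap\mathbb{Z}^2\to\mathbb{R}$, let $f_\phi(x)=\max\{t:(x,t)\in\mathrm{graph}_\phi\}$ on $k\triangle$, where $\mathrm{graph}_\phi$ is the convex hull of $\bigcup_{x\in k\triangle\cap\mathbb{Z}^2}\{(x,t):t\le\phi(x)\}$; $\mathrm{PL}(\triangle;k)$ is the set of all such $f_\phi$, and $\mathrm{PL}(\triangle;k)^{W}$ the $W$-invariant ones. $\mathrm{vol}$ is Lebesgue area. *)

theory Defs
  imports "HOL-Analysis.Analysis"
begin

definition tri2 :: "(real \<times> real) set" where
  "tri2 = convex hull {(2,0), (-2,0), (0,1), (0,-1)}"

definition ktri2 :: "nat \<Rightarrow> (real \<times> real) set" where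
  "ktri2 k = (\<lambda>x. real k *\<^sub>R x) ` tri2"

definition latt :: "(real \<times> real) set \<Rightarrow> (real \<times> real) set" where
  "latt S = {p \<in> S. fst p \<in> \<int> \<and> snd p \<in> \<int>}"

definition graph_phi :: "(real \<times> real) set \<Rightarrow> (real \<times> real \<Rightarrow> real) \<Rightarrow> ((real \<times> real) \<times> real) set" where
  "graph_phi P \<phi> = convex hull (\<Union>p\<in>latt P. {(p, t) | t. t \<le> \<phi> p})"

definition f_phi :: "(real \<times> real) set \<Rightarrow> (real \<times> real \<Rightarrow> real) \<Rightarrow> real \<times> real \<Rightarrow> real" where
  "f_phi P \<phi> x = Sup {t. (x, t) \<in> graph_phi P \<phi>}"

definition in_PL :: "nat \<Rightarrow> (real \<times> real \<Rightarrow> real) \<Rightarrow> bool" where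
  "in_PL k g \<longleftrightarrow> (\<exists>\<phi>. \<forall>x\<in>ktri2 k. g x = f_phi (ktri2 k) \<phi> x)"

definition W2_invariant :: "nat \<Rightarrow> (real \<times> real \<Rightarrow> real) \<Rightarrow> bool" where
  "W2_invariant k g \<longleftrightarrow>
     (\<forall>x y. (x, y) \<in> ktri2 k \<longrightarrow> g (-x, y) = g (x, y) \<and> g (x, -y) = g (x, y))"

definition is_const_on :: "(real \<times> real) set \<Rightarrow> (real \<times> real \<Rightarrow> real) \<Rightarrow> bool" where
  "is_const_on S g \<longleftrightarrow> (\<exists>c. \<forall>x\<in>S. g x = c)"

definition avec :: "nat \<Rightarrow> nat \<Rightarrow> real \<times> real" where
  "avec k i = (2 * real i, real k - real i)"

definition Tsimp :: "nat \<Rightarrow> nat \<Rightarrow> (real \<times> real) set" where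
  "Tsimp k i = convex hull {(0,0), avec k i, avec k (Suc i)}"

definition bcount :: "nat \<Rightarrow> nat" where
  "bcount k = card (latt (frontier (ktri2 k)))"

end

theory Submission
  imports Defs
begin


lemma Tsimp_eq:
  assumes kp: "k > 0"
  shows "Tsimp k i = {p. fst p + 2* snd p \<le> 2 * real k \<and> real i * (fst p + 2* snd p) \<le> real k * fst p
                        \<and> real k * fst p \<le> (real i + 1) * (fst p + 2* snd p)}"
proof -
  define K where "K = real k"
  define I where "I = real i"
  have K: "K > 0" using kp by (simp add: K_def)
  have a: "avec k i = (2 * I, K - I)" "avec k (Suc i) = (2 * I+2, K - I - 1)"
    by (simp_all add: avec_def K_def I_def)
  show ?thesis
    unfolding Tsimp_def a convex_hull_3 K_def[symmetric] I_def[symmetric]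
  proof (intro set_eqI iffI)
    fix p :: "real \<times> real"
    assume "p \<in> {u *\<^sub>R (0, 0) + v *\<^sub>R (2 * I, K - I) + w *\<^sub>R (2 * I + 2, K - I - 1) |u v w.
              0 \<le> u \<and> 0 \<le> v \<and> 0 \<le> w \<and> u + v + w = 1}"
    then obtain u v w where uvw: "0 \<le> u" "0 \<le> v" "0 \<le> w" "u + v + w = 1"
      and p: "p = u *\<^sub>R (0, 0) + v *\<^sub>R (2 * I, K - I) + w *\<^sub>R (2 * I + 2, K - I - 1)" by blast
    have x: "fst p = 2 * I * v + (2 * I+2) * w" and y: "snd p = (K-I) * v + (K-I-1) * w" using p by auto
    have s: "fst p + 2* snd p = 2 * K * (v+w)" unfolding x y by (simp add: algebra_simps)
    have e0: "2 * K * (v+w) \<le> 2 * K * 1" using uvw K by (intro mult_left_mono) auto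
    have e1: "K * fst p - I * (fst p + 2 * snd p) = 2 * K * w" unfolding x y by (simp add: algebra_simps)
    have e2: "(I+1) * (fst p + 2 * snd p) - K * fst p = 2 * K * v" unfolding x y by (simp add: algebra_simps)
    have e3: "0 \<le> 2 * K * w" "0 \<le> 2 * K * v" using uvw K by auto
    show "p \<in> {p. fst p + 2 * snd p \<le> 2 * K \<and> I * (fst p + 2 * snd p) \<le> K * fst p \<and> K * fst p \<le> (I + 1) * (fst p + 2 * snd p)}"
      unfolding mem_Collect_eq using s e0 e1 e2 e3 by (intro conjI; linarith)
  next
    fix p :: "real \<times> real"
    assume "p \<in> {p. fst p + 2 * snd p \<le> 2 * K \<and> I * (fst p + 2 * snd p) \<le> K * fst p \<and> K * fst p \<le> (I + 1) * (fst p + 2 * snd p)}"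
    then obtain x y where p: "p = (x,y)" and h1: "x + 2 * y \<le> 2 * K" and h2: "I * (x+2 * y) \<le> K * x"
      and h3: "K * x \<le> (I+1) * (x+2 * y)" by (cases p) auto
    define w where "w = (K * x - I * (x+2 * y))/(2 * K)"
    define v where "v = ((I+1) * (x+2 * y) - K * x)/(2 * K)"
    define u where "u = 1 - (x+2 * y)/(2 * K)"
    have "0 \<le> u" using h1 K by (simp add: u_def field_simps)
    moreover have "0 \<le> v" using h3 K by (simp add: v_def)
    moreover have "0 \<le> w" using h2 K by (simp add: w_def)
    moreover have "u + v + w = 1" using K by (simp add: u_def v_def w_def field_simps)
    moreover have "p = u *\<^sub>R (0, 0) + v *\<^sub>R (2 * I, K - I) + w *\<^sub>R (2 * I + 2, K - I - 1)"
      using K by (simp add: p u_def v_def w_def field_simps)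
    ultimately show "p \<in> {u *\<^sub>R (0, 0) + v *\<^sub>R (2 * I, K - I) + w *\<^sub>R (2 * I + 2, K - I - 1) |u v w.
              0 \<le> u \<and> 0 \<le> v \<and> 0 \<le> w \<and> u + v + w = 1}" by blast
  qed
qed


lemma image_invol: assumes "\<And>x. g (g x) = x" shows "(x \<in> g ` S) = (g x \<in> S)"
  by (metis assms image_iff)

lemma has_integral_pointreflect:
  fixes f :: "'a::euclidean_space \<Rightarrow> real"
  assumes f: "(f has_integral i) S" and bS: "bounded S"
  shows "((\<lambda>x. f (c - x)) has_integral i) ((\<lambda>x. c - x) ` S)"
proof -
  obtain a b where Sab: "S \<subseteq> cbox a b" using bS bounded_subset_cbox_symmetric by blast
  define F where "F = (\<lambda>x. if x \<in> S then f x else 0)"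
  have "(F has_integral i) (cbox a b)" using f Sab unfolding F_def by (simp only: has_integral_restrict)
  from has_integral_affinity[OF this, of "-1" c]
  have 1: "((\<lambda>x. F ((-1) *\<^sub>R x + c)) has_integral (1 / \<bar>-1\<bar> ^ DIM('a)) *\<^sub>R i) ((\<lambda>x. (1 / (-1)) *\<^sub>R x + - ((1 / (-1)) *\<^sub>R c)) ` cbox a b)"
    by simp
  have e1: "(\<lambda>x. (1 / (-1::real)) *\<^sub>R x + - ((1 / (-1)) *\<^sub>R c)) = (\<lambda>x. c - x)" by (rule ext) simp
  have e2: "(1 / \<bar>-1::real\<bar> ^ DIM('a)) *\<^sub>R i = i" by simp
  have inv: "\<And>x. c - (c - x) = x" by simp
  have e3: "(\<lambda>x. F ((-1) *\<^sub>R x + c)) = (\<lambda>x. if x \<in> (\<lambda>x. c - x) ` S then f (c - x) else 0)"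
  proof
    fix x
    show "F ((-1) *\<^sub>R x + c) = (if x \<in> (\<lambda>x. c - x) ` S then f (c - x) else 0)"
      unfolding image_invol[of "\<lambda>x. c - x", OF inv] F_def by simp
  qed
  have "((\<lambda>x. if x \<in> (\<lambda>x. c - x) ` S then f (c - x) else 0) has_integral i) ((\<lambda>x. c - x) ` cbox a b)"
    using 1 unfolding e1 e2 e3 .
  moreover have "(\<lambda>x. c - x) ` S \<subseteq> (\<lambda>x. c - x) ` cbox a b" using Sab by (rule image_mono)
  ultimately show ?thesis by (simp only: has_integral_restrict)
qed

definition R1 :: "real \<times> real \<Rightarrow> real \<times> real" where "R1 p = (- fst p, snd p)"
definition R2 :: "real \<times> real \<Rightarrow> real \<times> real" where "R2 p = (fst p, - snd p)"

lemma R1_R1[simp]: "R1 (R1 p) = p" by (simp add: R1_def)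
lemma R2_R2[simp]: "R2 (R2 p) = p" by (simp add: R2_def)

lemma R1_cbox: "R1 ` cbox (a1,a2) (b1,b2) = cbox (-b1,a2) (-a1,b2)"
proof (rule set_eqI)
  fix x show "(x \<in> R1 ` cbox (a1, a2) (b1, b2)) = (x \<in> cbox (- b1, a2) (- a1, b2))"
    unfolding image_invol[of R1, OF R1_R1] by (cases x) (auto simp: R1_def cbox_Pair_eq)
qed
lemma R2_cbox: "R2 ` cbox (a1,a2) (b1,b2) = cbox (a1,-b2) (b1,-a2)"
proof (rule set_eqI)
  fix x show "(x \<in> R2 ` cbox (a1, a2) (b1, b2)) = (x \<in> cbox (a1,-b2) (b1,-a2))"
    unfolding image_invol[of R2, OF R2_R2] by (cases x) (auto simp: R2_def cbox_Pair_eq)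
qed

lemma content_R1: "measure lborel (R1 ` cbox u v) = 1 * measure lborel (cbox u v)"
proof -
  obtain a1 a2 b1 b2 where "u = (a1,a2)" "v = (b1,b2)" by (cases u, cases v) auto
  then show ?thesis
    by (simp add: R1_cbox content_Pair)
qed

lemma content_R2: "measure lborel (R2 ` cbox u v) = 1 * measure lborel (cbox u v)"
proof -
  obtain a1 a2 b1 b2 where "u = (a1,a2)" "v = (b1,b2)" by (cases u, cases v) auto
  then show ?thesis
    by (simp add: R2_cbox content_Pair)
qed


lemma has_integral_R_gen:
  fixes f :: "real \<times> real \<Rightarrow> real" and R :: "real \<times> real \<Rightarrow> real \<times> real"
  assumes RR: "\<And>p. R (R p) = p" and cont: "\<And>x. continuous (at x) R"
    and box: "\<And>u v. \<exists>w z. R ` cbox u v = cbox w z"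
    and cnt: "\<And>u v. measure lborel (R ` cbox u v) = 1 * measure lborel (cbox u v)"
    and f: "(f has_integral i) S" and bS: "bounded S"
  shows "((\<lambda>x. f (R x)) has_integral i) (R ` S)"
proof -
  obtain a b where Sab: "S \<subseteq> cbox a b" using bS bounded_subset_cbox_symmetric by blast
  define F where "F = (\<lambda>x. if x \<in> S then f x else 0)"
  have "(F has_integral i) (cbox a b)" using f Sab unfolding F_def by (simp only: has_integral_restrict)
  from has_integral_twiddle[of 1 R R, OF _ RR RR cont box box cnt this]
  have 1: "((\<lambda>x. F (R x)) has_integral i) (R ` cbox a b)" by simp
  have e3: "(\<lambda>x. F (R x)) = (\<lambda>x. if x \<in> R ` S then f (R x) else 0)"
  proof
    fix x
    show "F (R x) = (if x \<in> R ` S then f (R x) else 0)"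
      unfolding image_invol[of R, OF RR] F_def by simp
  qed
  have "((\<lambda>x. if x \<in> R ` S then f (R x) else 0) has_integral i) (R ` cbox a b)"
    using 1 unfolding e3 .
  moreover have "R ` S \<subseteq> R ` cbox a b" using Sab by (rule image_mono)
  ultimately show ?thesis by (simp only: has_integral_restrict)
qed

lemma has_integral_R1:
  fixes f :: "real \<times> real \<Rightarrow> real"
  assumes f: "(f has_integral i) S" and bS: "bounded S"
  shows "((\<lambda>x. f (R1 x)) has_integral i) (R1 ` S)"
proof (rule has_integral_R_gen[OF R1_R1 _ _ content_R1 f bS])
  show "continuous (at x) R1" for x unfolding R1_def by (intro continuous_intros)
  show "\<exists>w z. R1 ` cbox u v = cbox w z" for u v
    by (cases u, cases v) (simp only: R1_cbox, blast)
qed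

lemma has_integral_R2:
  fixes f :: "real \<times> real \<Rightarrow> real"
  assumes f: "(f has_integral i) S" and bS: "bounded S"
  shows "((\<lambda>x. f (R2 x)) has_integral i) (R2 ` S)"
proof (rule has_integral_R_gen[OF R2_R2 _ _ content_R2 f bS])
  show "continuous (at x) R2" for x unfolding R2_def by (intro continuous_intros)
  show "\<exists>w z. R2 ` cbox u v = cbox w z" for u v
    by (cases u, cases v) (simp only: R2_cbox, blast)
qed

lemma negligible_line:
  assumes "a \<noteq> 0 \<or> b \<noteq> 0"
  shows "negligible {p::real\<times>real. a * fst p + b * snd p = c}"
proof -
  have "{p::real\<times>real. a * fst p + b * snd p = c} = {p. inner (a,b) p = c}"
    by (auto simp: inner_prod_def)
  moreover have "(a,b) \<noteq> 0" using assms by (simp add: zero_prod_def)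
  ultimately show ?thesis using negligible_hyperplane[of "(a,b)" c] by simp
qed

lemma has_integral_one_measure:
  "S \<in> lmeasurable \<Longrightarrow> ((\<lambda>_. 1::real) has_integral measure lebesgue S) S"
  by (metis has_integral_integrable_integral integrable_on_const lmeasure_integral)


lemma half_box:
  fixes a1 a2 b1 b2 \<alpha> \<beta> :: real
  assumes ab: "a1 \<le> b1" "a2 \<le> b2" and ne: "\<alpha> \<noteq> 0 \<or> \<beta> \<noteq> 0"
  defines "T \<equiv> cbox (a1,a2) (b1,b2) \<inter> {p. \<alpha> * (2 * fst p - a1 - b1) + \<beta> * (2 * snd p - a2 - b2) \<le> 0}"
  shows "((\<lambda>_. 1::real) has_integral ((b1-a1) * (b2-a2) / 2)) T"
proof -
  define c where "c = (a1+b1, a2+b2)"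
  define T' where "T' = cbox (a1,a2) (b1,b2) \<inter> {p. \<alpha> * (2 * fst p - a1 - b1) + \<beta> * (2 * snd p - a2 - b2) \<ge> 0}"
  have cT: "compact T" unfolding T_def
    by (intro compact_Int_closed compact_cbox closed_Collect_le continuous_intros)
  then have Tm: "T \<in> lmeasurable" by (rule lmeasurable_compact)
  have h1: "((\<lambda>_. 1::real) has_integral measure lebesgue T) T"
    using Tm by (rule has_integral_one_measure)
  have inv: "\<And>x. c - (c - x) = x" by simp
  have imT: "(\<lambda>x. c - x) ` T = T'"
  proof (rule set_eqI)
    fix p :: "real \<times> real"
    obtain x y where p: "p = (x,y)" by (cases p)
    have "(c - p \<in> T) = (p \<in> T')"
      unfolding p T_def T'_def c_def by (simp add: cbox_Pair_eq algebra_simps) (auto simp: algebra_simps)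
    then show "(p \<in> (\<lambda>x. c - x) ` T) = (p \<in> T')"
      unfolding image_invol[of "\<lambda>x. c - x", OF inv] .
  qed
  have h2: "((\<lambda>_. 1::real) has_integral measure lebesgue T) T'"
    using has_integral_pointreflect[OF h1 compact_imp_bounded[OF cT], of c] imT by simp
  have "((\<lambda>_. 1::real) has_integral (measure lebesgue T + measure lebesgue T)) (T \<union> T')"
  proof (rule has_integral_Un[OF h1 h2])
    have "T \<inter> T' \<subseteq> {p. (2*\<alpha>) * fst p + (2*\<beta>) * snd p = \<alpha> * (a1+b1) + \<beta> * (a2+b2)}"
    proof
      fix p assume "p \<in> T \<inter> T'"
      then have "\<alpha> * (2 * fst p - a1 - b1) + \<beta> * (2 * snd p - a2 - b2) = 0"
        unfolding T_def T'_def by auto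
      then show "p \<in> {p. (2*\<alpha>) * fst p + (2*\<beta>) * snd p = \<alpha> * (a1+b1) + \<beta> * (a2+b2)}"
        by (simp add: algebra_simps)
    qed
    moreover have "negligible {p::real\<times>real. (2*\<alpha>) * fst p + (2*\<beta>) * snd p = \<alpha> * (a1+b1) + \<beta> * (a2+b2)}"
      by (rule negligible_line) (use ne in auto)
    ultimately show "negligible (T \<inter> T')" by (rule negligible_subset[rotated])
  qed
  moreover have "T \<union> T' = cbox (a1,a2) (b1,b2)" unfolding T_def T'_def by auto
  ultimately have "((\<lambda>_. 1::real) has_integral (2 * measure lebesgue T)) (cbox (a1,a2) (b1,b2))" by simp
  moreover have "((\<lambda>_. 1::real) has_integral ((b1-a1) * (b2-a2))) (cbox (a1,a2) (b1,b2))"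
    using has_integral_const[of "1::real" "(a1,a2)" "(b1,b2)"] ab
    by (simp add: content_Pair)
  ultimately have "2 * measure lebesgue T = (b1-a1) * (b2-a2)" by (rule has_integral_unique)
  then have "measure lebesgue T = (b1-a1) * (b2-a2) / 2" by simp
  then show ?thesis using h1 by metis
qed

lemma hull4_eq:
  assumes c: "c \<ge> 0"
  shows "convex hull {(2*c,0),(-2*c,0),(0,c),(0,-c)} = {p::real\<times>real. \<bar>fst p\<bar> + 2*\<bar>snd p\<bar> \<le> 2*c}"
proof
  have eq: "{p::real\<times>real. \<bar>fst p\<bar> + 2*\<bar>snd p\<bar> \<le> 2*c} =
     {p. inner (1,2) p \<le> 2*c} \<inter> {p. inner (-1,2) p \<le> 2*c} \<inter> {p. inner (1,-2) p \<le> 2*c} \<inter> {p. inner (-1,-2) p \<le> 2*c}"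
    by (auto simp: inner_prod_def abs_le_iff)
  have cv: "convex {p::real\<times>real. \<bar>fst p\<bar> + 2*\<bar>snd p\<bar> \<le> 2*c}"
    unfolding eq by (intro convex_Int convex_halfspace_le)
  show "convex hull {(2*c,0),(-2*c,0),(0,c),(0,-c)} \<subseteq> {p::real\<times>real. \<bar>fst p\<bar> + 2*\<bar>snd p\<bar> \<le> 2*c}"
    by (rule hull_minimal) (use c cv in auto)
next
  show "{p::real\<times>real. \<bar>fst p\<bar> + 2*\<bar>snd p\<bar> \<le> 2*c} \<subseteq> convex hull {(2*c,0),(-2*c,0),(0,c),(0,-c)}"
  proof
    fix p :: "real \<times> real" assume "p \<in> {p::real\<times>real. \<bar>fst p\<bar> + 2*\<bar>snd p\<bar> \<le> 2*c}"
    then obtain x y where p: "p = (x,y)" and h: "\<bar>x\<bar> + 2*\<bar>y\<bar> \<le> 2*c" by (cases p) auto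
    show "p \<in> convex hull {(2*c,0),(-2*c,0),(0,c),(0,-c)}"
    proof (cases "c = 0")
      case True
      then have "p = (0,c)" using h p by auto
      then show ?thesis by (simp add: hull_inc)
    next
      case False
      with c have cp: "c > 0" by auto
      show ?thesis
      proof (cases "y \<ge> 0")
        case True
        define u where "u = (2*c - 2*y + x)/(4*c)"
        define w where "w = (2*c - 2*y - x)/(4*c)"
        define v where "v = y/c"
        have "0 \<le> 2*c - 2*y + x" "0 \<le> 2*c - 2*y - x" using h True by (auto simp: abs_le_iff)
        then have "0 \<le> u" "0 \<le> v" "0 \<le> w" "u+v+w = 1"
          using cp True by (auto simp: u_def v_def w_def field_simps)
        moreover have "p = u *\<^sub>R (2*c,0) + v *\<^sub>R (0,c) + w *\<^sub>R (-2*c,0)"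
          using cp by (simp add: p u_def v_def w_def field_simps)
        ultimately have "p \<in> convex hull {(2*c,0),(0,c),(-2*c,0)}"
          unfolding convex_hull_3 by blast
        moreover have "convex hull {(2*c,0),(0,c),(-2*c,0)} \<subseteq> convex hull {(2*c,0),(-2*c,0),(0,c),(0,-c)}"
          by (rule hull_mono) auto
        ultimately show ?thesis by blast
      next
        case False
        define u where "u = (2*c + 2*y + x)/(4*c)"
        define w where "w = (2*c + 2*y - x)/(4*c)"
        define v where "v = -y/c"
        have "0 \<le> 2*c + 2*y + x" "0 \<le> 2*c + 2*y - x" using h False by (auto simp: abs_le_iff)
        then have "0 \<le> u" "0 \<le> v" "0 \<le> w" "u+v+w = 1"
          using cp False by (auto simp: u_def v_def w_def field_simps)
        moreover have "p = u *\<^sub>R (2*c,0) + v *\<^sub>R (0,-c) + w *\<^sub>R (-2*c,0)"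
          using cp by (simp add: p u_def v_def w_def field_simps)
        ultimately have "p \<in> convex hull {(2*c,0),(0,-c),(-2*c,0)}"
          unfolding convex_hull_3 by blast
        moreover have "convex hull {(2*c,0),(0,-c),(-2*c,0)} \<subseteq> convex hull {(2*c,0),(-2*c,0),(0,c),(0,-c)}"
          by (rule hull_mono) auto
        ultimately show ?thesis by blast
      qed
    qed
  qed
qed

lemma ktri2_hull: "ktri2 k = convex hull {(2*real k,0),(-2*real k,0),(0,real k),(0,-real k)}"
proof -
  have "ktri2 k = convex hull ((\<lambda>x. real k *\<^sub>R x) ` {(2,0),(-2,0),(0,1),(0,-1)})"
    unfolding ktri2_def tri2_def by (rule convex_hull_scaling[symmetric])
  also have "(\<lambda>x. real k *\<^sub>R x) ` {(2,0),(-2,0),(0,1),(0,-1)} = {(2*real k,0),(-2*real k,0),(0,real k),(0,-real k)}"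
    by auto
  finally show ?thesis .
qed

lemma ktri2_eq: "ktri2 k = {p. \<bar>fst p\<bar> + 2*\<bar>snd p\<bar> \<le> 2*real k}"
  unfolding ktri2_hull by (rule hull4_eq) simp



definition Q1 :: "nat \<Rightarrow> (real \<times> real) set" where
  "Q1 k = ktri2 k \<inter> {p. 0 \<le> fst p \<and> 0 \<le> snd p}"

lemma bounded_ktri2: "bounded (ktri2 k)"
  unfolding ktri2_hull by (intro compact_imp_bounded compact_convex_hull) auto

lemma compact_ktri2: "compact (ktri2 k)"
  unfolding ktri2_hull by (intro compact_convex_hull) auto

lemma quadrants:
  fixes h :: "real \<times> real \<Rightarrow> real"
  assumes inv: "W2_invariant k h" and hQ: "(h has_integral J) (Q1 k)"
  shows "(h has_integral (4 * J)) (ktri2 k)"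
proof -
  define D where "D = ktri2 k"
  have Dm: "p \<in> D \<longleftrightarrow> \<bar>fst p\<bar> + 2 * \<bar>snd p\<bar> \<le> 2 * real k" for p
    unfolding D_def ktri2_eq by simp
  have bD: "bounded D" unfolding D_def by (rule bounded_ktri2)
  have Q1m: "p \<in> Q1 k \<longleftrightarrow> p \<in> D \<and> 0 \<le> fst p \<and> 0 \<le> snd p" for p
    unfolding Q1_def D_def by auto
  define Q2 where "Q2 = R1 ` Q1 k"
  define Q4 where "Q4 = R2 ` Q1 k"
  define Q3 where "Q3 = R1 ` Q4"
  have Q2m: "p \<in> Q2 \<longleftrightarrow> p \<in> D \<and> fst p \<le> 0 \<and> 0 \<le> snd p" for p
    unfolding Q2_def image_invol[of R1, OF R1_R1] Q1m Dm by (simp add: R1_def)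
  have Q4m: "p \<in> Q4 \<longleftrightarrow> p \<in> D \<and> 0 \<le> fst p \<and> snd p \<le> 0" for p
    unfolding Q4_def image_invol[of R2, OF R2_R2] Q1m Dm by (simp add: R2_def)
  have Q3m: "p \<in> Q3 \<longleftrightarrow> p \<in> D \<and> fst p \<le> 0 \<and> snd p \<le> 0" for p
    unfolding Q3_def image_invol[of R1, OF R1_R1] Q4m Dm by (simp add: R1_def)
  have hR1: "h (R1 p) = h p" if "p \<in> D" for p
  proof -
    obtain x y where p: "p = (x,y)" by (cases p)
    show ?thesis using inv that unfolding W2_invariant_def p R1_def D_def by auto
  qed
  have hR2: "h (R2 p) = h p" if "p \<in> D" for p
  proof -
    obtain x y where p: "p = (x,y)" by (cases p)
    show ?thesis using inv that unfolding W2_invariant_def p R2_def D_def by auto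
  qed
  have bQ1: "bounded (Q1 k)" using bD by (rule bounded_subset) (auto simp: Q1m)
  have bQ4: "bounded Q4" using bD by (rule bounded_subset) (auto simp: Q4m)
  have i2: "(h has_integral J) Q2"
  proof -
    have "((\<lambda>x. h (R1 x)) has_integral J) Q2" unfolding Q2_def by (rule has_integral_R1[OF hQ bQ1])
    then show ?thesis by (rule has_integral_eq[rotated]) (simp add: hR1 Q2m)
  qed
  have i4: "(h has_integral J) Q4"
  proof -
    have "((\<lambda>x. h (R2 x)) has_integral J) Q4" unfolding Q4_def by (rule has_integral_R2[OF hQ bQ1])
    then show ?thesis by (rule has_integral_eq[rotated]) (simp add: hR2 Q4m)
  qed
  have i3: "(h has_integral J) Q3"
  proof -
    have "((\<lambda>x. h (R1 x)) has_integral J) Q3" unfolding Q3_def by (rule has_integral_R1[OF i4 bQ4])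
    then show ?thesis by (rule has_integral_eq[rotated]) (simp add: hR1 Q3m)
  qed
  define Z where "Z = {p::real\<times>real. 1 * fst p + 0 * snd p = 0} \<union> {p. 0 * fst p + 1 * snd p = 0}"
  have nZ: "negligible Z" unfolding Z_def by (intro negligible_Un negligible_line) auto
  have a: "(h has_integral (J + J)) (Q1 k \<union> Q2)"
    by (rule has_integral_Un[OF hQ i2], rule negligible_subset[OF nZ]) (auto simp: Z_def Q1m Q2m)
  have b: "(h has_integral (J + J + J)) ((Q1 k \<union> Q2) \<union> Q4)"
    by (rule has_integral_Un[OF a i4], rule negligible_subset[OF nZ]) (auto simp: Z_def Q1m Q2m Q4m)
  have c: "(h has_integral (J + J + J + J)) (((Q1 k \<union> Q2) \<union> Q4) \<union> Q3)"
    by (rule has_integral_Un[OF b i3], rule negligible_subset[OF nZ]) (auto simp: Z_def Q1m Q2m Q4m Q3m)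
  have "((Q1 k \<union> Q2) \<union> Q4) \<union> Q3 = D"
    by (auto simp: Q1m Q2m Q3m Q4m)
  with c show ?thesis unfolding D_def by (simp add: algebra_simps)
qed


lemma Q1_eq: "Q1 k = cbox (0,0) (2*real k, real k) \<inter> {p. 1 * (2 * fst p - 0 - 2*real k) + 2 * (2 * snd p - 0 - real k) \<le> 0}"
proof (rule set_eqI)
  fix p :: "real \<times> real"
  obtain x y where p: "p = (x,y)" by (cases p)
  show "(p \<in> Q1 k) = (p \<in> cbox (0,0) (2*real k, real k) \<inter> {p. 1 * (2 * fst p - 0 - 2*real k) + 2 * (2 * snd p - 0 - real k) \<le> 0})"
    unfolding p Q1_def ktri2_eq by (auto simp: cbox_Pair_eq)
qed

lemma integral_one_ktri2: "((\<lambda>_. 1::real) has_integral (4 * (real k)^2)) (ktri2 k)"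
proof -
  have "((\<lambda>_. 1::real) has_integral ((2*real k - 0) * (real k - 0) / 2)) (Q1 k)"
    unfolding Q1_eq by (rule half_box) auto
  then have "((\<lambda>_. 1::real) has_integral (4 * ((2*real k - 0) * (real k - 0) / 2))) (ktri2 k)"
    by (intro quadrants) (auto simp: W2_invariant_def)
  then show ?thesis by (simp add: power2_eq_square)
qed

lemma measure_ktri2: "measure lebesgue (ktri2 k) = 4 * (real k)^2"
proof -
  have "ktri2 k \<in> lmeasurable" by (rule lmeasurable_compact[OF compact_ktri2])
  from has_integral_one_measure[OF this] integral_one_ktri2 show ?thesis
    by (rule has_integral_unique)
qed

lemma measure_T0:
  assumes k1: "k \<ge> 1"
  shows "measure lebesgue (Tsimp k 0) = real k"
proof -
  define K where "K = real k"
  have K1: "K \<ge> 1" using k1 by (simp add: K_def)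
  have T0: "p \<in> Tsimp k 0 \<longleftrightarrow> fst p + 2 * snd p \<le> 2 * K \<and> 0 \<le> K * fst p \<and> K * fst p \<le> fst p + 2 * snd p" for p
  proof -
    have "k > 0" using k1 by simp
    then show ?thesis using Tsimp_eq[of k 0] by (simp add: K_def)
  qed
  define Trap where "Trap = {p::real\<times>real. 0 \<le> fst p \<and> fst p \<le> 2 \<and> 0 \<le> snd p \<and> fst p + 2 * snd p \<le> 2 * K}"
  define U where "U = cbox (0,0) (2,K-1) \<inter> {p. (-(K-1)) * (2 * fst p - 0 - 2) + 2 * (2 * snd p - 0 - (K-1)) \<le> 0}"
  define Sm where "Sm = cbox (0,K-1) (2,K) \<inter> {p. 1 * (2 * fst p - 0 - 2) + 2 * (2 * snd p - (K-1) - K) \<le> 0}"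
  have iU: "((\<lambda>_. 1::real) has_integral ((2 - 0) * ((K-1) - 0) / 2)) U"
    unfolding U_def by (rule half_box) (use K1 in auto)
  have iSm: "((\<lambda>_. 1::real) has_integral ((2 - 0) * (K - (K-1)) / 2)) Sm"
    unfolding Sm_def by (rule half_box) (use K1 in auto)
  have iB: "((\<lambda>_. 1::real) has_integral (2 * (K-1))) (cbox (0::real,0) (2,K-1))"
    using has_integral_const[of "1::real" "(0::real,0::real)" "(2::real,K-1)"] K1 by (simp add: content_Pair)
  have "((\<lambda>_. 1::real) has_integral (2 * (K-1) + (2 - 0) * (K - (K-1)) / 2)) (cbox (0,0) (2,K-1) \<union> Sm)"
  proof (rule has_integral_Un[OF iB iSm])
    have "cbox (0,0) (2,K-1) \<inter> Sm \<subseteq> {p. 0 * fst p + 1 * snd p = K-1}"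
      unfolding Sm_def by (auto simp: cbox_Pair_eq)
    then show "negligible (cbox (0,0) (2,K-1) \<inter> Sm)"
      by (rule negligible_subset[OF negligible_line, rotated]) auto
  qed
  moreover have "cbox (0,0) (2,K-1) \<union> Sm = Trap"
  proof (rule set_eqI)
    fix p :: "real \<times> real"
    obtain x y where p: "p = (x,y)" by (cases p)
    show "(p \<in> cbox (0,0) (2,K-1) \<union> Sm) = (p \<in> Trap)"
      unfolding p Sm_def Trap_def using K1 by (auto simp: cbox_Pair_eq)
  qed
  ultimately have iTrap: "((\<lambda>_. 1::real) has_integral (2 * K - 1)) Trap" by (simp add: algebra_simps)
  have cT0: "compact (Tsimp k 0)" unfolding Tsimp_def by (intro compact_convex_hull) auto
  have iT0: "((\<lambda>_. 1::real) has_integral measure lebesgue (Tsimp k 0)) (Tsimp k 0)"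
    by (rule has_integral_one_measure[OF lmeasurable_compact[OF cT0]])
  have "((\<lambda>_. 1::real) has_integral (measure lebesgue (Tsimp k 0) + (2 - 0) * ((K-1) - 0) / 2)) (Tsimp k 0 \<union> U)"
  proof (rule has_integral_Un[OF iT0 iU])
    have "Tsimp k 0 \<inter> U \<subseteq> {p. (K-1) * fst p + (-2) * snd p = 0}"
    proof
      fix p assume a: "p \<in> Tsimp k 0 \<inter> U"
      obtain x y where p: "p = (x,y)" by (cases p)
      have "K * x \<le> x + 2 * y" using a T0 p by auto
      moreover have "- (K - 1) * (2 * x - 2) + 2 * (2 * y - (K - 1)) \<le> 0" using a p U_def by auto
      ultimately show "p \<in> {p. (K-1) * fst p + (-2) * snd p = 0}" unfolding p
        by (simp add: algebra_simps)
    qed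
    then show "negligible (Tsimp k 0 \<inter> U)"
      by (rule negligible_subset[OF negligible_line, rotated]) auto
  qed
  moreover have "Tsimp k 0 \<union> U = Trap"
  proof (rule set_eqI)
    fix p :: "real \<times> real"
    obtain x y where p: "p = (x,y)" by (cases p)
    have Um: "p \<in> U \<longleftrightarrow> 0 \<le> x \<and> x \<le> 2 \<and> 0 \<le> y \<and> y \<le> K - 1 \<and> 2 * y \<le> (K-1) * x"
      unfolding p U_def by (auto simp: cbox_Pair_eq algebra_simps)
    have Tm: "p \<in> Tsimp k 0 \<longleftrightarrow> x + 2 * y \<le> 2 * K \<and> 0 \<le> K * x \<and> K * x \<le> x + 2 * y"
      using T0[of p] by (simp add: p)
    have Trm: "p \<in> Trap \<longleftrightarrow> 0 \<le> x \<and> x \<le> 2 \<and> 0 \<le> y \<and> x + 2 * y \<le> 2 * K"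
      unfolding p Trap_def by simp
    have kx: "K * x = (K - 1) * x + x" by (simp add: algebra_simps)
    have l1: "0 \<le> K * x \<Longrightarrow> 0 \<le> x" using K1 by (simp add: zero_le_mult_iff)
    have l2: "K * x \<le> K * 2 \<Longrightarrow> x \<le> 2" using K1 by simp
    have l3: "0 \<le> x \<Longrightarrow> 0 \<le> (K-1) * x" using K1 by simp
    have l4: "x \<le> 2 \<Longrightarrow> (K-1) * x \<le> (K-1) * 2" using K1 by (intro mult_left_mono) auto
    show "(p \<in> Tsimp k 0 \<union> U) = (p \<in> Trap)"
      unfolding Un_iff Um Tm Trm using kx l1 l2 l3 l4 K1 by smt
  qed
  ultimately have "((\<lambda>_. 1::real) has_integral (measure lebesgue (Tsimp k 0) + (2 - 0) * ((K-1) - 0) / 2)) Trap" by simp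
  moreover have "(2 - 0) * ((K-1) - 0) / 2 = K - 1" by simp
  ultimately have "((\<lambda>_. 1::real) has_integral (measure lebesgue (Tsimp k 0) + (K-1))) Trap" by metis
  from this iTrap have "measure lebesgue (Tsimp k 0) + (K-1) = 2 * K - 1" by (rule has_integral_unique)
  then show ?thesis by (simp add: K_def)
qed


lemma Tsimp_mem:
  assumes "k > 0"
  shows "p \<in> Tsimp k i \<longleftrightarrow> fst p + 2 * snd p \<le> 2 * real k \<and> real i * (fst p + 2 * snd p) \<le> real k * fst p
                        \<and> real k * fst p \<le> (real i + 1) * (fst p + 2 * snd p)"
  using Tsimp_eq[OF assms, of i] by auto

lemma Tsimp_s_nonneg:
  assumes "real i * s \<le> kx" "kx \<le> (real i + 1) * s"
  shows "0 \<le> (s::real)"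
  using assms by (simp add: distrib_right)

lemma Q1_mem: "p \<in> Q1 k \<longleftrightarrow> 0 \<le> fst p \<and> 0 \<le> snd p \<and> fst p + 2 * snd p \<le> 2 * real k"
  unfolding Q1_def ktri2_eq by auto

lemma Q1_Union:
  assumes kp: "k > 0"
  shows "Q1 k = (\<Union>i\<in>{..<k}. Tsimp k i)"
proof (rule set_eqI)
  fix p :: "real \<times> real"
  obtain x y where p: "p = (x,y)" by (cases p)
  define K where "K = real k"
  have K: "K > 0" using kp by (simp add: K_def)
  define s where "s = x + 2 * y"
  have Tm: "p \<in> Tsimp k i \<longleftrightarrow> s \<le> 2 * K \<and> real i * s \<le> K * x \<and> K * x \<le> (real i + 1) * s" for i
    using Tsimp_mem[OF kp, of p i] by (simp add: p s_def K_def)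
  have Qm: "p \<in> Q1 k \<longleftrightarrow> 0 \<le> x \<and> 0 \<le> y \<and> s \<le> 2 * K"
    using Q1_mem[of p k] by (simp add: p s_def K_def)
  show "p \<in> Q1 k \<longleftrightarrow> p \<in> (\<Union>i\<in>{..<k}. Tsimp k i)"
  proof
    assume "p \<in> (\<Union>i\<in>{..<k}. Tsimp k i)"
    then obtain i where i: "i < k" and h: "s \<le> 2 * K" "real i * s \<le> K * x" "K * x \<le> (real i + 1) * s"
      using Tm by auto
    have s0: "0 \<le> s" by (rule Tsimp_s_nonneg[OF h(2,3)])
    have "0 \<le> real i * s" using s0 by simp
    then have "0 \<le> K * x" using h by linarith
    then have x0: "0 \<le> x" using K by (simp add: zero_le_mult_iff)
    have "real i + 1 \<le> K" using i by (simp add: K_def)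
    then have "(real i + 1) * s \<le> K * s" using s0 by (rule mult_right_mono)
    then have "K * x \<le> K * s" using h by linarith
    then have "x \<le> s" using K by simp
    then have "0 \<le> y" by (simp add: s_def)
    with x0 h show "p \<in> Q1 k" using Qm by simp
  next
    assume "p \<in> Q1 k"
    then have x0: "0 \<le> x" and y0: "0 \<le> y" and sK: "s \<le> 2 * K" using Qm by auto
    show "p \<in> (\<Union>i\<in>{..<k}. Tsimp k i)"
    proof (cases "s = 0")
      case True
      then have "x = 0" using x0 y0 by (simp add: s_def)
      then have "p \<in> Tsimp k 0" using Tm[of 0] True sK by simp
      then show ?thesis using kp by auto
    next
      case False
      then have sp: "s > 0" using x0 y0 by (simp add: s_def)
      define t where "t = K * x / s"
      have Kx: "K * x = t * s" using sp by (simp add: t_def)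
      have t0: "0 \<le> t" using K x0 sp by (simp add: t_def)
      have "x \<le> s" using y0 by (simp add: s_def)
      then have "K * x \<le> K * s" using K by simp
      then have tK: "t \<le> K" using sp by (simp add: t_def divide_le_eq)
      obtain i where i: "i < k" "real i \<le> t" "t \<le> real i + 1"
      proof (cases "t < K")
        case True
        define i where "i = nat \<lfloor>t\<rfloor>"
        have ri: "real i = of_int \<lfloor>t\<rfloor>" using t0 by (simp add: i_def)
        have "real i \<le> t" "t \<le> real i + 1" unfolding ri by linarith+
        moreover have "real i < real k" using \<open>real i \<le> t\<close> True by (simp add: K_def)
        ultimately show ?thesis using that[of i] by simp
      next
        case False
        then have "t = K" using tK by simp
        moreover have "real (k - 1) = K - 1" using kp by (simp add: K_def of_nat_diff)
        ultimately show ?thesis using that[of "k - 1"] kp by simp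
      qed
      have "real i * s \<le> t * s" using i sp by (intro mult_right_mono) auto
      moreover have "t * s \<le> (real i + 1) * s" using i sp by (intro mult_right_mono) auto
      ultimately have "p \<in> Tsimp k i" using Tm[of i] sK Kx by simp
      then show ?thesis using i by auto
    qed
  qed
qed

lemma Tsimp_neg:
  assumes kp: "k > 0" and ij: "i < j"
  shows "negligible (Tsimp k i \<inter> Tsimp k j)"
proof -
  have "Tsimp k i \<inter> Tsimp k j \<subseteq> {p. (real k - (real i + 1)) * fst p + (- 2 * (real i + 1)) * snd p = 0}"
  proof
    fix p assume "p \<in> Tsimp k i \<inter> Tsimp k j"
    then have a: "real k * fst p \<le> (real i + 1) * (fst p + 2 * snd p)"
      and b: "real j * (fst p + 2 * snd p) \<le> real k * fst p"
      and c: "real k * fst p \<le> (real j + 1) * (fst p + 2 * snd p)"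
      using Tsimp_mem[OF kp] by auto
    have s0: "0 \<le> fst p + 2 * snd p" by (rule Tsimp_s_nonneg[OF b c])
    have "real i + 1 \<le> real j" using ij by simp
    then have "(real i + 1) * (fst p + 2 * snd p) \<le> real j * (fst p + 2 * snd p)"
      using s0 by (rule mult_right_mono)
    with a b have "real k * fst p = (real i + 1) * (fst p + 2 * snd p)" by linarith
    then show "p \<in> {p. (real k - (real i + 1)) * fst p + (- 2 * (real i + 1)) * snd p = 0}"
      by (simp add: algebra_simps)
  qed
  moreover have "negligible {p::real\<times>real. (real k - (real i + 1)) * fst p + (- 2 * (real i + 1)) * snd p = 0}"
    by (rule negligible_line) simp
  ultimately show ?thesis by (rule negligible_subset[rotated])
qed

lemma fan_integral:
  fixes h :: "real \<times> real \<Rightarrow> real"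
  assumes kp: "k > 0" and int: "\<And>i. i < k \<Longrightarrow> h integrable_on Tsimp k i"
  shows "(h has_integral (\<Sum>i<k. integral (Tsimp k i) h)) (Q1 k)"
proof -
  have "(h has_integral (\<Sum>i\<in>{..<k}. integral (Tsimp k i) h)) (\<Union>i\<in>{..<k}. Tsimp k i)"
  proof (rule has_integral_UN)
    show "(h has_integral integral (Tsimp k i) h) (Tsimp k i)" if "i \<in> {..<k}" for i
      using int that by (simp add: has_integral_integral)
    show "pairwise (\<lambda>i i'. negligible (Tsimp k i \<inter> Tsimp k i')) {..<k}"
      unfolding pairwise_def
    proof (intro ballI impI)
      fix i j :: nat assume "i \<noteq> j"
      then have "(i::nat) < j \<or> j < i" by auto
      then show "negligible (Tsimp k i \<inter> Tsimp k j)"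
        using Tsimp_neg[OF kp] by (metis Int_commute)
    qed
  qed simp
  then show ?thesis using Q1_Union[OF kp] by simp
qed



lemma sum_count: "(\<Sum>b\<in>{-int n..int n}. (4*K + 1 - 4*\<bar>b\<bar>)) = (2*int n+1)*(4*K+1) - 4*int n*(int n+1)"
proof (induction n)
  case 0 then show ?case by simp
next
  case (Suc n)
  have e: "{-int (Suc n)..int (Suc n)} = insert (-int(Suc n)) (insert (int (Suc n)) {-int n..int n})" by auto
  show ?case unfolding e using Suc by (simp add: algebra_simps)
qed

lemma sum_count_b:
  assumes "n \<ge> 1"
  shows "(\<Sum>b\<in>{-int n..int n}. (if \<bar>b\<bar> = int n then 1 else 2::int)) = 4*int n"
proof -
  obtain m where n: "n = Suc m" using assms by (cases n) auto
  have e: "{-int n..int n} = insert (-int n) (insert (int n) {-int m..int m})" unfolding n by auto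
  have "(\<Sum>b\<in>{-int m..int m}. (if \<bar>b\<bar> = int n then 1 else 2::int)) = (\<Sum>b\<in>{-int m..int m}. 2)"
    by (rule sum.cong) (auto simp: n)
  then show ?thesis unfolding e by (simp add: n algebra_simps)
qed

lemma latt_ktri2:
  "latt (ktri2 k) = (\<lambda>(b,a). (real_of_int a, real_of_int b)) ` (SIGMA b:{-int k..int k}. {-(2*int k - 2*\<bar>b\<bar>)..2*int k - 2*\<bar>b\<bar>})"
proof (rule set_eqI)
  fix p :: "real \<times> real"
  show "p \<in> latt (ktri2 k) \<longleftrightarrow> p \<in> (\<lambda>(b,a). (real_of_int a, real_of_int b)) ` (SIGMA b:{-int k..int k}. {-(2*int k - 2*\<bar>b\<bar>)..2*int k - 2*\<bar>b\<bar>})"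
  proof
    assume "p \<in> latt (ktri2 k)"
    then have h: "\<bar>fst p\<bar> + 2 * \<bar>snd p\<bar> \<le> 2 * real k" "fst p \<in> \<int>" "snd p \<in> \<int>"
      unfolding latt_def ktri2_eq by auto
    obtain a where a: "fst p = of_int a" using h(2) Ints_cases by blast
    obtain b where b: "snd p = of_int b" using h(3) Ints_cases by blast
    have "real_of_int (\<bar>a\<bar> + 2 * \<bar>b\<bar>) \<le> real_of_int (2 * int k)" using h(1) a b by simp
    then have ab: "\<bar>a\<bar> + 2 * \<bar>b\<bar> \<le> 2 * int k" by linarith
    have p: "p = (\<lambda>(b,a). (real_of_int a, real_of_int b)) (b,a)" using a b by (cases p) simp
    show "p \<in> (\<lambda>(b,a). (real_of_int a, real_of_int b)) ` (SIGMA b:{-int k..int k}. {-(2*int k - 2*\<bar>b\<bar>)..2*int k - 2*\<bar>b\<bar>})"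
      unfolding p by (rule imageI) (use ab in auto)
  next
    assume "p \<in> (\<lambda>(b,a). (real_of_int a, real_of_int b)) ` (SIGMA b:{-int k..int k}. {-(2*int k - 2*\<bar>b\<bar>)..2*int k - 2*\<bar>b\<bar>})"
    then obtain a b where p: "p = (real_of_int a, real_of_int b)" and ab: "\<bar>a\<bar> + 2 * \<bar>b\<bar> \<le> 2 * int k"
      by auto
    have "real_of_int (\<bar>a\<bar> + 2 * \<bar>b\<bar>) \<le> real_of_int (2 * int k)" using ab by linarith
    then show "p \<in> latt (ktri2 k)" unfolding latt_def ktri2_eq p by simp
  qed
qed

lemma card_latt_ktri2: "card (latt (ktri2 k)) = 4 * k^2 + 2 * k + 1"
proof -
  let ?S = "SIGMA b:{-int k..int k}. {-(2*int k - 2*\<bar>b\<bar>)..2*int k - 2*\<bar>b\<bar>}"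
  have inj: "inj_on (\<lambda>(b,a). (real_of_int a, real_of_int b)) ?S"
    by (auto simp: inj_on_def)
  have "int (card ?S) = (\<Sum>b\<in>{-int k..int k}. int (nat (4*int k + 1 - 4*\<bar>b\<bar>)))"
    by (simp add: of_nat_sum algebra_simps)
  also have "\<dots> = (\<Sum>b\<in>{-int k..int k}. (4*int k + 1 - 4*\<bar>b\<bar>))"
    by (rule sum.cong) auto
  also have "\<dots> = int (4 * k^2 + 2 * k + 1)" unfolding sum_count by (simp add: algebra_simps power2_eq_square)
  finally have "card ?S = 4 * k^2 + 2 * k + 1" by linarith
  then show ?thesis unfolding latt_ktri2 card_image[OF inj] .
qed


lemma frontier_ktri2:
  assumes k1: "k \<ge> 1"
  shows "frontier (ktri2 k) = {p. \<bar>fst p\<bar> + 2 * \<bar>snd p\<bar> = 2 * real k}"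
proof -
  define h where "h = (\<lambda>p::real\<times>real. \<bar>fst p\<bar> + 2 * \<bar>snd p\<bar>)"
  have D: "ktri2 k = {p. h p \<le> 2 * real k}" unfolding ktri2_eq h_def ..
  have ch: "continuous_on UNIV h" unfolding h_def by (intro continuous_intros)
  have cl: "closure (ktri2 k) = ktri2 k"
    using compact_ktri2 by (simp add: compact_imp_closed)
  have int: "interior (ktri2 k) = {p. h p < 2 * real k}"
  proof
    show "{p. h p < 2 * real k} \<subseteq> interior (ktri2 k)"
    proof (rule interior_maximal)
      show "{p. h p < 2 * real k} \<subseteq> ktri2 k" unfolding D by auto
      show "open {p. h p < 2 * real k}"
        using open_Collect_less[of h "\<lambda>_. 2 * real k"] ch
        by (simp add: continuous_on_const)
    qed
  next
    show "interior (ktri2 k) \<subseteq> {p. h p < 2 * real k}"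
    proof
      fix p assume p: "p \<in> interior (ktri2 k)"
      then have hp: "h p \<le> 2 * real k" using interior_subset D by blast
      obtain e where e: "e > 0" "ball p e \<subseteq> ktri2 k" using p by (meson mem_interior)
      show "p \<in> {p. h p < 2 * real k}"
      proof (rule ccontr)
        assume "p \<notin> {p. h p < 2 * real k}"
        then have hp2: "h p = 2 * real k" using hp by simp
        define d where "d = e / (2 * (norm p + 1))"
        have np: "0 < 2 * (norm p + 1)" by (smt (verit) norm_ge_zero)
        have d0: "d > 0" using e np by (simp add: d_def)
        define q where "q = (1 + d) *\<^sub>R p"
        have "dist p q = d * norm p" using d0 by (simp add: q_def dist_norm algebra_simps)
        also have "\<dots> < e"
        proof -
          have "d * norm p \<le> d * (norm p + 1)" using d0 by simp
          also have "\<dots> = e / 2" proof - have "norm p + 1 \<noteq> 0" "2 * norm p + 2 \<noteq> 0" using np by auto then show ?thesis by (simp add: d_def field_simps) qed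
          finally show ?thesis using e by simp
        qed
        finally have "q \<in> ktri2 k" using e by auto
        then have "h q \<le> 2 * real k" using D by auto
        moreover have "h q = (1 + d) * h p"
        proof -
          have "h q = \<bar>(1+d) * fst p\<bar> + 2 * \<bar>(1+d) * snd p\<bar>" by (simp add: h_def q_def)
          also have "\<dots> = (1+d) * \<bar>fst p\<bar> + 2 * ((1+d) * \<bar>snd p\<bar>)" using d0 by (simp only: abs_mult)
          finally show ?thesis by (simp add: h_def algebra_simps)
        qed
        moreover have "(1 + d) * h p > h p" using d0 hp2 k1 by simp
        ultimately show False using hp2 by simp
      qed
    qed
  qed
  show ?thesis unfolding frontier_def cl int using D by (auto simp: h_def)
qed

lemma latt_frontier:
  assumes "k \<ge> 1"
  shows "latt (frontier (ktri2 k)) = (\<lambda>(b,a). (real_of_int a, real_of_int b)) ` (SIGMA b:{-int k..int k}. {2*int k - 2*\<bar>b\<bar>, -(2*int k - 2*\<bar>b\<bar>)})"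
proof (rule set_eqI)
  fix p :: "real \<times> real"
  show "p \<in> latt (frontier (ktri2 k)) \<longleftrightarrow> p \<in> (\<lambda>(b,a). (real_of_int a, real_of_int b)) ` (SIGMA b:{-int k..int k}. {2*int k - 2*\<bar>b\<bar>, -(2*int k - 2*\<bar>b\<bar>)})"
  proof
    assume "p \<in> latt (frontier (ktri2 k))"
    then have h: "\<bar>fst p\<bar> + 2 * \<bar>snd p\<bar> = 2 * real k" "fst p \<in> \<int>" "snd p \<in> \<int>"
      unfolding latt_def frontier_ktri2[OF assms] by auto
    obtain a where a: "fst p = of_int a" using h(2) Ints_cases by blast
    obtain b where b: "snd p = of_int b" using h(3) Ints_cases by blast
    have "real_of_int (\<bar>a\<bar> + 2 * \<bar>b\<bar>) = real_of_int (2 * int k)" using h(1) a b by simp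
    then have ab: "\<bar>a\<bar> + 2 * \<bar>b\<bar> = 2 * int k" by linarith
    have p: "p = (\<lambda>(b,a). (real_of_int a, real_of_int b)) (b,a)" using a b by (cases p) simp
    show "p \<in> (\<lambda>(b,a). (real_of_int a, real_of_int b)) ` (SIGMA b:{-int k..int k}. {2*int k - 2*\<bar>b\<bar>, -(2*int k - 2*\<bar>b\<bar>)})"
      unfolding p by (rule imageI) (use ab in auto)
  next
    assume "p \<in> (\<lambda>(b,a). (real_of_int a, real_of_int b)) ` (SIGMA b:{-int k..int k}. {2*int k - 2*\<bar>b\<bar>, -(2*int k - 2*\<bar>b\<bar>)})"
    then obtain ba where ba: "ba \<in> (SIGMA b:{-int k..int k}. {2*int k - 2*\<bar>b\<bar>, -(2*int k - 2*\<bar>b\<bar>)})"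
      and p0: "p = (\<lambda>(b,a). (real_of_int a, real_of_int b)) ba" by blast
    obtain b a where bae: "ba = (b,a)" by (cases ba)
    have p: "p = (real_of_int a, real_of_int b)" using p0 bae by simp
    have "(a = 2*int k - 2*\<bar>b\<bar> \<or> a = -(2*int k - 2*\<bar>b\<bar>)) \<and> \<bar>b\<bar> \<le> int k" using ba bae by auto
    then have ab: "\<bar>a\<bar> + 2 * \<bar>b\<bar> = 2 * int k" by auto
    have "real_of_int (\<bar>a\<bar> + 2 * \<bar>b\<bar>) = real_of_int (2 * int k)" using ab by simp
    then show "p \<in> latt (frontier (ktri2 k))" unfolding latt_def frontier_ktri2[OF assms] p by simp
  qed
qed

lemma bcount_eq:
  assumes "k \<ge> 1"
  shows "bcount k = 4 * k"
proof -
  let ?S = "SIGMA b:{-int k..int k}. {2*int k - 2*\<bar>b\<bar>, -(2*int k - 2*\<bar>b\<bar>)}"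
  have inj: "inj_on (\<lambda>(b,a). (real_of_int a, real_of_int b)) ?S"
    by (auto simp: inj_on_def)
  have "int (card ?S) = (\<Sum>b\<in>{-int k..int k}. int (card {2*int k - 2*\<bar>b\<bar>, -(2*int k - 2*\<bar>b\<bar>)}))"
    by (simp add: of_nat_sum)
  also have "\<dots> = (\<Sum>b\<in>{-int k..int k}. (if \<bar>b\<bar> = int k then 1 else 2))"
    by (rule sum.cong) auto
  also have "\<dots> = int (4 * k)" using sum_count_b[OF assms] by simp
  finally have "card ?S = 4 * k" by linarith
  then show ?thesis unfolding bcount_def latt_frontier[OF assms] card_image[OF inj] .
qed



lemma finite_latt_ktri2: "finite (latt (ktri2 k))"
  unfolding latt_ktri2 by (intro finite_imageI finite_SigmaI) auto

lemma PL_props: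
  assumes hPL: "in_PL k g"
  obtains m M where "\<And>x. x \<in> ktri2 k \<Longrightarrow> m \<le> g x \<and> g x \<le> M"
    and "convex_on (ktri2 k) (\<lambda>x. - g x)"
proof -
  define D where "D = ktri2 k"
  obtain \<phi> where g: "\<And>x. x \<in> D \<Longrightarrow> g x = f_phi D \<phi> x" using hPL unfolding in_PL_def D_def by blast
  define P where "P = latt D"
  define G where "G = graph_phi D \<phi>"
  define f where "f = f_phi D \<phi>"
  have fG: "f x = Sup {t. (x,t) \<in> G}" for x unfolding f_def G_def f_phi_def ..
  have G: "G = convex hull (\<Union>p\<in>P. {(p, t) | t. t \<le> \<phi> p})" unfolding G_def graph_phi_def P_def ..
  have finP: "finite P" unfolding P_def D_def by (rule finite_latt_ktri2)
  have v: "(2*real k,0) \<in> P" "(-2*real k,0) \<in> P" "(0,real k) \<in> P" "(0,-real k) \<in> P"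
    unfolding P_def D_def latt_def ktri2_eq by auto
  then have Pne: "P \<noteq> {}" by auto
  define m where "m = Min (\<phi> ` P)"
  define M where "M = Max (\<phi> ` P)"
  have mle: "m \<le> \<phi> p" if "p \<in> P" for p unfolding m_def using finP that by simp
  have Mge: "\<phi> p \<le> M" if "p \<in> P" for p unfolding M_def using finP that by simp
  have cG: "convex G" unfolding G by (rule convex_convex_hull)
  have GM: "G \<subseteq> {z. snd z \<le> M}"
    unfolding G
  proof (rule hull_minimal)
    show "(\<Union>p\<in>P. {(p, t) | t. t \<le> \<phi> p}) \<subseteq> {z. snd z \<le> M}" using Mge by force
    have "{z::(real\<times>real)\<times>real. snd z \<le> M} = {z. inner ((0,0),1) z \<le> M}" by (simp add: inner_prod_def)
    then show "convex {z::(real\<times>real)\<times>real. snd z \<le> M}" by (simp add: convex_halfspace_le)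
  qed
  have Dm: "(x, m) \<in> G" if "x \<in> D" for x
  proof -
    define C where "C = {x. (x, m) \<in> G}"
    have cC: "convex C"
      unfolding convex_def C_def
    proof (intro allI impI ballI, clarify)
      fix x y :: "real \<times> real" and u v :: real
      assume a: "(x, m) \<in> G" "(y, m) \<in> G" "0 \<le> u" "0 \<le> v" "u + v = 1"
      have "u *\<^sub>R (x, m) + v *\<^sub>R (y, m) \<in> G" using convexD[OF cG a(1,2) a(3,4,5)] .
      moreover have "u *\<^sub>R (x, m) + v *\<^sub>R (y, m) = (u *\<^sub>R x + v *\<^sub>R y, m)"
      proof -
        have "u * m + v * m = m" using a(5) by (metis distrib_right mult_1)
        then show ?thesis by simp
      qed
      ultimately show "(u *\<^sub>R x + v *\<^sub>R y, m) \<in> G" by simp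
    qed
    have "(p, m) \<in> G" if "p \<in> P" for p
    proof -
      have "(p, m) \<in> (\<Union>p\<in>P. {(p, t) | t. t \<le> \<phi> p})" using that mle by blast
      then show ?thesis unfolding G by (rule hull_inc)
    qed
    then have "{(2*real k,0),(-2*real k,0),(0,real k),(0,-real k)} \<subseteq> C" using v unfolding C_def by auto
    then have "D \<subseteq> C" unfolding D_def ktri2_hull using cC by (rule hull_minimal)
    then show ?thesis using that unfolding C_def by auto
  qed
  have bdd: "bdd_above {t. (x,t) \<in> G}" for x
    unfolding bdd_above_def using GM by force
  have fbounds: "m \<le> f x \<and> f x \<le> M" if "x \<in> D" for x
  proof
    show "m \<le> f x" unfolding fG using Dm[OF that] bdd by (intro cSup_upper) auto
    show "f x \<le> M" unfolding fG using Dm[OF that] GM by (intro cSup_least) auto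
  qed
  have conc: "convex_on D (\<lambda>x. - f x)"
  proof (rule convex_onI)
    show "convex D" unfolding D_def ktri2_hull by (rule convex_convex_hull)
    fix t :: real and x y assume t: "0 < t" "t < 1" and xy: "x \<in> D" "y \<in> D"
    define z where "z = (1 - t) *\<^sub>R x + t *\<^sub>R y"
    have key: "(1 - t) * a + t * b \<le> f z" if "(x,a) \<in> G" "(y,b) \<in> G" for a b
    proof -
      have "(1 - t) *\<^sub>R (x,a) + t *\<^sub>R (y,b) \<in> G" using convexD[OF cG that] t by simp
      then have "(z, (1 - t) * a + t * b) \<in> G" by (simp add: z_def)
      then show ?thesis unfolding fG using bdd by (intro cSup_upper) auto
    qed
    have step1: "(1 - t) * f x + t * b \<le> f z" if "(y,b) \<in> G" for b
    proof -
      have "f x \<le> (f z - t * b) / (1 - t)" unfolding fG[of x]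
      proof (rule cSup_least)
        show "{ta. (x, ta) \<in> G} \<noteq> {}" using Dm[OF xy(1)] by auto
        fix a assume "a \<in> {ta. (x, ta) \<in> G}"
        then have "(1 - t) * a + t * b \<le> f z" using key that by auto
        then show "a \<le> (f z - t * b) / (1 - t)" using t by (simp add: field_simps)
      qed
      then show ?thesis using t by (simp add: field_simps)
    qed
    have "f y \<le> (f z - (1 - t) * f x) / t" unfolding fG[of y]
    proof (rule cSup_least)
      show "{ta. (y, ta) \<in> G} \<noteq> {}" using Dm[OF xy(2)] by auto
      fix b assume "b \<in> {ta. (y, ta) \<in> G}"
      then have "(1 - t) * f x + t * b \<le> f z" using step1 by auto
      then show "b \<le> (f z - (1 - t) * f x) / t" using t by (simp add: field_simps)
    qed
    then have "(1 - t) * f x + t * f y \<le> f z" using t by (simp add: field_simps)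
    then show "- f ((1 - t) *\<^sub>R x + t *\<^sub>R y) \<le> (1 - t) * - f x + t * - f y"
      unfolding z_def by simp
  qed
  show ?thesis
  proof (rule that[of m M])
    show "m \<le> g x \<and> g x \<le> M" if "x \<in> ktri2 k" for x
      using fbounds[of x] g[of x] that unfolding D_def f_def by simp
    show "convex_on (ktri2 k) (\<lambda>x. - g x)"
    proof -
      have cD: "convex D" unfolding D_def ktri2_hull by (rule convex_convex_hull)
      show ?thesis unfolding convex_on_def
      proof (intro conjI ballI allI impI)
        show "convex (ktri2 k)" using cD by (simp add: D_def)
        fix x y :: "real \<times> real" and u v :: real
        assume a: "x \<in> ktri2 k" "y \<in> ktri2 k" "0 \<le> u" "0 \<le> v" "u + v = 1"
        have z: "u *\<^sub>R x + v *\<^sub>R y \<in> D" using convexD[OF cD] a by (auto simp: D_def)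
        have "- f (u *\<^sub>R x + v *\<^sub>R y) \<le> u * - f x + v * - f y"
          using conc a unfolding convex_on_def D_def by blast
        then show "- g (u *\<^sub>R x + v *\<^sub>R y) \<le> u * - g x + v * - g y"
          using g[OF z] g[of x] g[of y] a by (simp add: D_def f_def)
      qed
    qed
  qed
qed

lemma integrable_convex_subset:
  fixes g :: "real \<times> real \<Rightarrow> real"
  assumes cont: "continuous_on (interior D) g" and bnd: "\<And>x. x \<in> D \<Longrightarrow> \<bar>g x\<bar> \<le> C"
    and S: "convex S" "compact S" "S \<subseteq> D"
  shows "g integrable_on S"
proof -
  have iS: "interior S \<subseteq> interior D" using S(3) by (rule interior_mono)
  have c: "continuous_on (interior S) g" using cont iS by (rule continuous_on_subset)
  have bS: "bounded (interior S)" using compact_imp_bounded[OF S(2)] interior_subset bounded_subset by blast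
  have mS: "interior S \<in> lmeasurable" using bS by (intro lmeasurable_open) auto
  have "g integrable_on interior S"
  proof (rule measurable_bounded_by_integrable_imp_integrable)
    show "g \<in> borel_measurable (lebesgue_on (interior S))"
      using c mS by (intro continuous_imp_measurable_on_sets_lebesgue) (auto dest: fmeasurableD)
    show "(\<lambda>_. C) integrable_on interior S" using mS by (rule integrable_on_const)
    show "norm (g x) \<le> C" if "x \<in> interior S" for x
      using bnd that iS interior_subset by (metis real_norm_def subsetD)
    show "interior S \<in> sets lebesgue" using mS by (auto dest: fmeasurableD)
  qed
  moreover have "negligible (frontier S)" using S(1) by (rule negligible_convex_frontier)
  moreover have "S - interior S \<subseteq> frontier S"
    using compact_imp_closed[OF S(2)] by (simp add: frontier_def closure_closed)
  ultimately show ?thesis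
  proof (intro integrable_spike_set[of g "interior S" S])
    have "{x \<in> interior S - S. g x \<noteq> 0} = {}" using interior_subset[of S] by blast
    then show "negligible {x \<in> interior S - S. g x \<noteq> 0}" by (metis negligible_empty)
    show "negligible {x \<in> S - interior S. g x \<noteq> 0}" if "negligible (frontier S)" "S - interior S \<subseteq> frontier S"
      using that by (auto intro: negligible_subset)
  qed
qed



lemma convex_Q1: "convex (Q1 k)"
proof -
  have "{p::real\<times>real. 0 \<le> fst p \<and> 0 \<le> snd p} = {p. inner (-1,0) p \<le> 0} \<inter> {p. inner (0,-1) p \<le> 0}"
    by (auto simp: inner_prod_def)
  then have "convex {p::real\<times>real. 0 \<le> fst p \<and> 0 \<le> snd p}"
    by (simp add: convex_Int convex_halfspace_le)
  then show ?thesis unfolding Q1_def ktri2_hull by (intro convex_Int convex_convex_hull)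
qed

lemma compact_Q1: "compact (Q1 k)"
  unfolding Q1_def
  by (intro compact_Int_closed compact_ktri2 closed_Collect_conj closed_Collect_le continuous_intros)

theorem lemma4p1:
  fixes k :: nat and g \<delta> :: "real \<times> real \<Rightarrow> real"
  assumes hk: "k \<ge> 1"
    and h\<delta>: "(\<Sum>p\<in>latt (ktri2 k). \<delta> p) = 1"
    and hPL: "in_PL k g"
    and hW: "W2_invariant k g"
    and ha: "(\<Sum>p\<in>latt (ktri2 k). g p) - integral (ktri2 k) g
               \<le> (1/2) * (\<Sum>p\<in>latt (frontier (ktri2 k)). g p) + (\<Sum>p\<in>latt (ktri2 k). \<delta> p * g p)"
    and ha_eq: "(\<Sum>p\<in>latt (ktri2 k). g p) - integral (ktri2 k) g
               = (1/2) * (\<Sum>p\<in>latt (frontier (ktri2 k)). g p) + (\<Sum>p\<in>latt (ktri2 k). \<delta> p * g p)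
               \<Longrightarrow> is_const_on (ktri2 k) g"
    and hb: "(real (bcount k) + 2) * 4 / (2 * real (bcount k) * measure lebesgue (Tsimp k 0))
               * (\<Sum>i<k. integral (Tsimp k i) g)
             \<ge> (1/2) * (\<Sum>p\<in>latt (frontier (ktri2 k)). g p) + (\<Sum>p\<in>latt (ktri2 k). \<delta> p * g p)"
    and hb_eq: "(real (bcount k) + 2) * 4 / (2 * real (bcount k) * measure lebesgue (Tsimp k 0))
               * (\<Sum>i<k. integral (Tsimp k i) g)
             = (1/2) * (\<Sum>p\<in>latt (frontier (ktri2 k)). g p) + (\<Sum>p\<in>latt (ktri2 k). \<delta> p * g p)
               \<Longrightarrow> is_const_on (ktri2 k) g"
  shows "integral (ktri2 k) g / measure lebesgue (ktri2 k)
           \<ge> (\<Sum>p\<in>latt (ktri2 k). g p) / real (card (latt (ktri2 k)))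
         \<and> (integral (ktri2 k) g / measure lebesgue (ktri2 k)
             = (\<Sum>p\<in>latt (ktri2 k). g p) / real (card (latt (ktri2 k)))
            \<longleftrightarrow> is_const_on (ktri2 k) g)"
proof -
  define D where "D = ktri2 k"
  have kp: "k > 0" using hk by simp
  obtain m M where bnd: "\<And>x. x \<in> ktri2 k \<Longrightarrow> m \<le> g x \<and> g x \<le> M"
    and cv: "convex_on (ktri2 k) (\<lambda>x. - g x)" using PL_props[OF hPL] by blast
  define C where "C = max \<bar>m\<bar> \<bar>M\<bar>"
  have bndC: "\<bar>g x\<bar> \<le> C" if "x \<in> ktri2 k" for x using bnd[OF that] by (auto simp: C_def)
  have cvi: "convex_on (interior (ktri2 k)) (\<lambda>x. - g x)"
    using cv interior_subset by (rule convex_on_subset) (simp add: convex_interior ktri2_hull)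
  have "continuous_on (interior (ktri2 k)) (\<lambda>x. - g x)"
    by (rule convex_on_continuous[OF open_interior cvi])
  then have cont: "continuous_on (interior (ktri2 k)) g"
    using continuous_on_minus by fastforce
  have intS: "g integrable_on S" if "convex S" "compact S" "S \<subseteq> ktri2 k" for S
    by (rule integrable_convex_subset[OF cont bndC that]) auto
  have intD: "g integrable_on ktri2 k"
    by (rule intS) (auto simp: compact_ktri2, simp add: ktri2_hull convex_convex_hull)
  have Q1D: "Q1 k \<subseteq> ktri2 k" unfolding Q1_def by auto
  have intQ: "g integrable_on Q1 k" by (rule intS[OF convex_Q1 compact_Q1 Q1D])
  have TQ: "Tsimp k i \<subseteq> Q1 k" if "i < k" for i using Q1_Union[OF kp] that by auto
  have intT: "g integrable_on Tsimp k i" if "i < k" for i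
  proof (rule intS)
    show "convex (Tsimp k i)" unfolding Tsimp_def by (rule convex_convex_hull)
    show "compact (Tsimp k i)" unfolding Tsimp_def by (rule compact_convex_hull) auto
    show "Tsimp k i \<subseteq> ktri2 k" using TQ[OF that] Q1D by auto
  qed
  define J where "J = integral (Q1 k) g"
  define I where "I = integral (ktri2 k) g"
  have hJ: "(g has_integral J) (Q1 k)" using intQ unfolding J_def by (simp add: has_integral_integral)
  have "(g has_integral (4 * J)) (ktri2 k)" by (rule quadrants[OF hW hJ])
  then have IJ: "I = 4 * J" unfolding I_def by (rule integral_unique)
  have "(g has_integral (\<Sum>i<k. integral (Tsimp k i) g)) (Q1 k)" by (rule fan_integral[OF kp intT])
  then have TJ: "(\<Sum>i<k. integral (Tsimp k i) g) = J" using hJ by (rule has_integral_unique)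
  define K where "K = real k"
  have K1: "K \<ge> 1" using hk by (simp add: K_def)
  have A: "measure lebesgue (ktri2 k) = 4 * K^2" unfolding K_def by (rule measure_ktri2)
  have N: "real (card (latt (ktri2 k))) = 4 * K^2 + 2 * K + 1" unfolding K_def card_latt_ktri2 by simp
  have b: "real (bcount k) = 4 * K" unfolding K_def bcount_eq[OF hk] by simp
  have T0: "measure lebesgue (Tsimp k 0) = K" unfolding K_def by (rule measure_T0[OF hk])
  define Ssum where "Ssum = (\<Sum>p\<in>latt (ktri2 k). g p)"
  define B where "B = (1/2) * (\<Sum>p\<in>latt (frontier (ktri2 k)). g p) + (\<Sum>p\<in>latt (ktri2 k). \<delta> p * g p)"
  have coef: "(real (bcount k) + 2) * 4 / (2 * real (bcount k) * measure lebesgue (Tsimp k 0))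
               * (\<Sum>i<k. integral (Tsimp k i) g) = (2 * K + 1) * I / (4 * K^2)"
    unfolding b T0 TJ IJ using K1 by (simp add: field_simps power2_eq_square)
  have ha': "Ssum - I \<le> B" using ha unfolding Ssum_def I_def B_def .
  have hb': "B \<le> (2 * K + 1) * I / (4 * K^2)" using hb unfolding coef B_def .
  have K2: "4 * K^2 > 0" using K1 by simp
  have Np: "4 * K^2 + 2 * K + 1 > 0" using K1 by (simp add: add_pos_pos)
  have main: "Ssum * (4 * K^2) \<le> I * (4 * K^2 + 2 * K + 1)"
  proof -
    have "Ssum \<le> I + (2 * K + 1) * I / (4 * K^2)" using ha' hb' by linarith
    then have "Ssum * (4 * K^2) \<le> (I + (2 * K + 1) * I / (4 * K^2)) * (4 * K^2)"
      using K2 by (intro mult_right_mono) auto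
    also have "\<dots> = I * (4 * K^2 + 2 * K + 1)" using K2 by (simp add: field_simps)
    finally show ?thesis .
  qed
  have iff1: "(Ssum / (4 * K^2 + 2 * K + 1) \<le> I / (4 * K^2)) \<longleftrightarrow> Ssum * (4 * K^2) \<le> I * (4 * K^2 + 2 * K + 1)"
    using K2 Np by (simp add: divide_le_eq le_divide_eq field_simps)
  have iff2: "(I / (4 * K^2) = Ssum / (4 * K^2 + 2 * K + 1)) \<longleftrightarrow> Ssum * (4 * K^2) = I * (4 * K^2 + 2 * K + 1)"
    using K2 Np by (simp add: field_simps) (auto simp: algebra_simps)
  show ?thesis
    unfolding A N I_def[symmetric] Ssum_def[symmetric]
  proof (intro conjI iffI)
    show "Ssum / (4 * K^2 + 2 * K + 1) \<le> I / (4 * K^2)" using iff1 main by simp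
  next
    assume "I / (4 * K^2) = Ssum / (4 * K^2 + 2 * K + 1)"
    then have e: "Ssum * (4 * K^2) = I * (4 * K^2 + 2 * K + 1)" using iff2 by simp
    have "Ssum = I + (2 * K + 1) * I / (4 * K^2)"
    proof -
      have "Ssum = Ssum * (4 * K^2) / (4 * K^2)" using K2 by simp
      also have "\<dots> = I * (4 * K^2 + 2 * K + 1) / (4 * K^2)" using e by simp
      also have "\<dots> = I + (2 * K + 1) * I / (4 * K^2)" using K2 by (simp add: field_simps)
      finally show ?thesis .
    qed
    then have "Ssum - I = B" using ha' hb' by linarith
    then show "is_const_on (ktri2 k) g" using ha_eq unfolding Ssum_def I_def B_def by blast
  next
    assume "is_const_on (ktri2 k) g"
    then obtain c0 where c0: "\<And>x. x \<in> ktri2 k \<Longrightarrow> g x = c0" unfolding is_const_on_def by blast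
    have "Ssum = (\<Sum>p\<in>latt (ktri2 k). c0)" unfolding Ssum_def
      by (rule sum.cong) (auto simp: latt_def c0)
    then have S: "Ssum = c0 * (4 * K^2 + 2 * K + 1)" using N by simp
    have "((\<lambda>_. c0 * 1) has_integral (c0 * (4 * K^2))) (ktri2 k)"
      using has_integral_mult_right[OF integral_one_ktri2[of k], of c0] unfolding K_def by simp
    then have "(g has_integral (c0 * (4 * K^2))) (ktri2 k)"
      by (rule has_integral_eq[rotated]) (simp add: c0)
    then have "I = c0 * (4 * K^2)" unfolding I_def by (rule integral_unique)
    then show "I / (4 * K^2) = Ssum / (4 * K^2 + 2 * K + 1)" using S K2 Np by simp
  qed
qed


end
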